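(* Let $(\mathcal{C},\wedge,S)$ be a braided monoidal category with braiding $\beta$, and let $T$ be an object of $\mathcal{C}$. Assume that $T$ is symmetric and dualizable. Then $T$ has $t$-twisted trivial braiding, where $t = \mathrm{id}_T \wedge (\varepsilon \beta_{T,T^\vee}^{-1} \eta)$ is multiplication by the Euler characteristic of $T$.
   Context: Here $T$ is called symmetric if $(\mathrm{id}_T \wedge \beta_{T,T}^{-1})(\beta_{T,T} \wedge \mathrm{id}_T) = \mathrm{id}_{T\wedge T\wedge T}$. $T$ is dualizable with dual $T^\vee$, meaning there are morphisms $\eta: S \to T^\vee \wedge T$ (unit) and $\varepsilon: T \wedge T^\vee \to S$ (counit) satisfying the triangle equations $(\varepsilon \wedge \mathrm{id}_T)(\mathrm{id}_T \wedge \eta) = \mathrm{id}_T$ and $(\mathrm{id}_{T^\vee} \wedge \varepsilon)(\eta \wedge \mathrm{id}_{T^\vee}) = \mathrm{id}_{T^\vee}$. For an endomorphism $t: T \to T$, $T$ is said to have $t$-twisted trivial braiding if $\beta_{T,T} = \mathrm{id}_T \wedge t$ (equivalently $\beta_{T,T} = t \wedge \mathrm{id}_T$). Monoidal structure is taken to be strict. The composite $\varepsilon \beta_{T,T^\vee}^{-1} \eta : S \to S$ is the Euler characteristic of $T$. *)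

theory Defs
  imports Main
begin

text \<open>Composition cmp C g f means "g after f".\<close>

record ('o, 'm) bmcat =
  Ob    :: "'o set"
  Arr   :: "'m set"
  dom   :: "'m \<Rightarrow> 'o"
  cod   :: "'m \<Rightarrow> 'o"
  cmp   :: "'m \<Rightarrow> 'm \<Rightarrow> 'm"
  ident :: "'o \<Rightarrow> 'm"
  tob   :: "'o \<Rightarrow> 'o \<Rightarrow> 'o"
  tar   :: "'m \<Rightarrow> 'm \<Rightarrow> 'm"
  unit  :: "'o"
  braid :: "'o \<Rightarrow> 'o \<Rightarrow> 'm"

definition hom :: "('o, 'm) bmcat \<Rightarrow> 'm \<Rightarrow> 'o \<Rightarrow> 'o \<Rightarrow> bool" where
  "hom C f A B \<longleftrightarrow> f \<in> Arr C \<and> dom C f = A \<and> cod C f = B"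

definition is_iso :: "('o, 'm) bmcat \<Rightarrow> 'm \<Rightarrow> bool" where
  "is_iso C f \<longleftrightarrow> f \<in> Arr C \<and> (\<exists>g. hom C g (cod C f) (dom C f) \<and>
      cmp C g f = ident C (dom C f) \<and> cmp C f g = ident C (cod C f))"

definition inv_arr :: "('o, 'm) bmcat \<Rightarrow> 'm \<Rightarrow> 'm" where
  "inv_arr C f = (THE g. hom C g (cod C f) (dom C f) \<and>
      cmp C g f = ident C (dom C f) \<and> cmp C f g = ident C (cod C f))"

definition category :: "('o, 'm) bmcat \<Rightarrow> bool" where
  "category C \<longleftrightarrow>
    (\<forall>f \<in> Arr C. dom C f \<in> Ob C \<and> cod C f \<in> Ob C) \<and>
    (\<forall>A \<in> Ob C. hom C (ident C A) A A) \<and>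
    (\<forall>f g. f \<in> Arr C \<and> g \<in> Arr C \<and> cod C f = dom C g \<longrightarrow>
        hom C (cmp C g f) (dom C f) (cod C g)) \<and>
    (\<forall>f g h. f \<in> Arr C \<and> g \<in> Arr C \<and> h \<in> Arr C \<and> cod C f = dom C g \<and> cod C g = dom C h
        \<longrightarrow> cmp C h (cmp C g f) = cmp C (cmp C h g) f) \<and>
    (\<forall>f \<in> Arr C. cmp C (ident C (cod C f)) f = f \<and> cmp C f (ident C (dom C f)) = f)"

definition strict_monoidal :: "('o, 'm) bmcat \<Rightarrow> bool" where
  "strict_monoidal C \<longleftrightarrow> category C \<and>
    unit C \<in> Ob C \<and>
    (\<forall>A \<in> Ob C. \<forall>B \<in> Ob C. tob C A B \<in> Ob C) \<and>
    (\<forall>f \<in> Arr C. \<forall>g \<in> Arr C.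
        hom C (tar C f g) (tob C (dom C f) (dom C g)) (tob C (cod C f) (cod C g))) \<and>
    (\<forall>A \<in> Ob C. \<forall>B \<in> Ob C. tar C (ident C A) (ident C B) = ident C (tob C A B)) \<and>
    (\<forall>f g f' g'. f \<in> Arr C \<and> g \<in> Arr C \<and> f' \<in> Arr C \<and> g' \<in> Arr C \<and>
        cod C f = dom C g \<and> cod C f' = dom C g' \<longrightarrow>
        tar C (cmp C g f) (cmp C g' f') = cmp C (tar C g g') (tar C f f')) \<and>
    (\<forall>A \<in> Ob C. \<forall>B \<in> Ob C. \<forall>D \<in> Ob C. tob C (tob C A B) D = tob C A (tob C B D)) \<and>
    (\<forall>A \<in> Ob C. tob C (unit C) A = A \<and> tob C A (unit C) = A) \<and>
    (\<forall>f \<in> Arr C. \<forall>g \<in> Arr C. \<forall>h \<in> Arr C. tar C (tar C f g) h = tar C f (tar C g h)) \<and>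
    (\<forall>f \<in> Arr C. tar C (ident C (unit C)) f = f \<and> tar C f (ident C (unit C)) = f)"

definition braided_strict_monoidal :: "('o, 'm) bmcat \<Rightarrow> bool" where
  "braided_strict_monoidal C \<longleftrightarrow> strict_monoidal C \<and>
    (\<forall>A \<in> Ob C. \<forall>B \<in> Ob C.
        hom C (braid C A B) (tob C A B) (tob C B A) \<and> is_iso C (braid C A B)) \<and>
    (\<forall>f \<in> Arr C. \<forall>g \<in> Arr C.
        cmp C (braid C (cod C f) (cod C g)) (tar C f g)
          = cmp C (tar C g f) (braid C (dom C f) (dom C g))) \<and>
    (\<forall>A \<in> Ob C. \<forall>B \<in> Ob C. \<forall>D \<in> Ob C.
        braid C (tob C A B) D
          = cmp C (tar C (braid C A D) (ident C B)) (tar C (ident C A) (braid C B D))) \<and>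
    (\<forall>A \<in> Ob C. \<forall>B \<in> Ob C. \<forall>D \<in> Ob C.
        braid C A (tob C B D)
          = cmp C (tar C (ident C B) (braid C A D)) (tar C (braid C A B) (ident C D)))"

definition symmetric_obj :: "('o, 'm) bmcat \<Rightarrow> 'o \<Rightarrow> bool" where
  "symmetric_obj C T \<longleftrightarrow>
    cmp C (tar C (ident C T) (inv_arr C (braid C T T))) (tar C (braid C T T) (ident C T))
      = ident C (tob C T (tob C T T))"

definition is_dual :: "('o, 'm) bmcat \<Rightarrow> 'o \<Rightarrow> 'o \<Rightarrow> 'm \<Rightarrow> 'm \<Rightarrow> bool" where
  "is_dual C T Tv \<eta> \<epsilon> \<longleftrightarrow> Tv \<in> Ob C \<and>
    hom C \<eta> (unit C) (tob C Tv T) \<and> hom C \<epsilon> (tob C T Tv) (unit C) \<and>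
    cmp C (tar C \<epsilon> (ident C T)) (tar C (ident C T) \<eta>) = ident C T \<and>
    cmp C (tar C (ident C Tv) \<epsilon>) (tar C \<eta> (ident C Tv)) = ident C Tv"

definition euler_char :: "('o, 'm) bmcat \<Rightarrow> 'o \<Rightarrow> 'o \<Rightarrow> 'm \<Rightarrow> 'm \<Rightarrow> 'm" where
  "euler_char C T Tv \<eta> \<epsilon> = cmp C \<epsilon> (cmp C (inv_arr C (braid C T Tv)) \<eta>)"

definition twisted_trivial_braiding :: "('o, 'm) bmcat \<Rightarrow> 'o \<Rightarrow> 'm \<Rightarrow> bool" where
  "twisted_trivial_braiding C T t \<longleftrightarrow> braid C T T = tar C (ident C T) t"

end

theory Submission
  imports Defs
begin

locale bsm =
  fixes C :: "('o, 'm) bmcat"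
  assumes bsm: "braided_strict_monoidal C"
begin

abbreviation cp (infixr "\<cdot>" 55) where "g \<cdot> f \<equiv> cmp C g f"
abbreviation tp (infixr "\<otimes>" 70) where "f \<otimes> g \<equiv> tar C f g"
abbreviation tobp (infixr "\<star>" 70) where "A \<star> B \<equiv> tob C A B"
abbreviation ii where "ii A \<equiv> ident C A"
abbreviation hm where "hm f A B \<equiv> hom C f A B"

lemma sm: "strict_monoidal C" using bsm unfolding braided_strict_monoidal_def by blast
lemma cat: "category C" using sm unfolding strict_monoidal_def by blast

lemma ob: "hm f A B \<Longrightarrow> A \<in> Ob C \<and> B \<in> Ob C"
  using cat unfolding category_def hom_def by blast
lemma id_hom: "A \<in> Ob C \<Longrightarrow> hm (ii A) A A"
  using cat unfolding category_def by blast
lemma comp_hom: "hm f A B \<Longrightarrow> hm g B D \<Longrightarrow> hm (g \<cdot> f) A D"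
  using cat unfolding category_def hom_def by metis
lemma comp_assoc: "hm f A B \<Longrightarrow> hm g B D \<Longrightarrow> hm h D E \<Longrightarrow> h \<cdot> (g \<cdot> f) = (h \<cdot> g) \<cdot> f"
  using cat unfolding category_def hom_def by metis
lemma id_l: "hm f A B \<Longrightarrow> ii B \<cdot> f = f"
  using cat unfolding category_def hom_def by metis
lemma id_r: "hm f A B \<Longrightarrow> f \<cdot> ii A = f"
  using cat unfolding category_def hom_def by metis
lemma unit_ob: "unit C \<in> Ob C" using sm unfolding strict_monoidal_def by blast
lemma tob_ob: "A \<in> Ob C \<Longrightarrow> B \<in> Ob C \<Longrightarrow> A \<star> B \<in> Ob C"
  using sm unfolding strict_monoidal_def by blast
lemma tar_hom: "hm f A B \<Longrightarrow> hm g A' B' \<Longrightarrow> hm (f \<otimes> g) (A \<star> A') (B \<star> B')"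
  using sm unfolding strict_monoidal_def hom_def by metis
lemma tar_id: "A \<in> Ob C \<Longrightarrow> B \<in> Ob C \<Longrightarrow> ii A \<otimes> ii B = ii (A \<star> B)"
  using sm unfolding strict_monoidal_def by blast
lemma interchange: "hm f A B \<Longrightarrow> hm g B D \<Longrightarrow> hm f' A' B' \<Longrightarrow> hm g' B' D' \<Longrightarrow>
   (g \<cdot> f) \<otimes> (g' \<cdot> f') = (g \<otimes> g') \<cdot> (f \<otimes> f')"
  using sm unfolding strict_monoidal_def hom_def by metis
lemma tob_assoc: "A \<in> Ob C \<Longrightarrow> B \<in> Ob C \<Longrightarrow> D \<in> Ob C \<Longrightarrow> (A \<star> B) \<star> D = A \<star> (B \<star> D)"
  using sm unfolding strict_monoidal_def by blast
lemma tob_unit: "A \<in> Ob C \<Longrightarrow> unit C \<star> A = A \<and> A \<star> unit C = A"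
  using sm unfolding strict_monoidal_def by blast
lemma tar_assoc: "hm f A B \<Longrightarrow> hm g A' B' \<Longrightarrow> hm h A'' B'' \<Longrightarrow> (f \<otimes> g) \<otimes> h = f \<otimes> (g \<otimes> h)"
  using sm unfolding strict_monoidal_def hom_def by metis
lemma tar_unit: "hm f A B \<Longrightarrow> ii (unit C) \<otimes> f = f \<and> f \<otimes> ii (unit C) = f"
  using sm unfolding strict_monoidal_def hom_def by metis
lemma braid_hom: "A \<in> Ob C \<Longrightarrow> B \<in> Ob C \<Longrightarrow> hm (braid C A B) (A \<star> B) (B \<star> A)"
  using bsm unfolding braided_strict_monoidal_def by blast
lemma braid_iso: "A \<in> Ob C \<Longrightarrow> B \<in> Ob C \<Longrightarrow> is_iso C (braid C A B)"
  using bsm unfolding braided_strict_monoidal_def by blast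
lemma braid_nat: "hm f A B \<Longrightarrow> hm g A' B' \<Longrightarrow>
   braid C B B' \<cdot> (f \<otimes> g) = (g \<otimes> f) \<cdot> braid C A A'"
  using bsm unfolding braided_strict_monoidal_def hom_def by metis
lemma hex2: "A \<in> Ob C \<Longrightarrow> B \<in> Ob C \<Longrightarrow> D \<in> Ob C \<Longrightarrow>
   braid C A (B \<star> D) = (ii B \<otimes> braid C A D) \<cdot> (braid C A B \<otimes> ii D)"
  using bsm unfolding braided_strict_monoidal_def by blast

lemma inv_unique:
  assumes f: "hm f A B" and g: "hm g B A" and gf: "g \<cdot> f = ii A" and fg: "f \<cdot> g = ii B"
  shows "inv_arr C f = g"
proof -
  have d: "dom C f = A" "cod C f = B" using f unfolding hom_def by auto
  show ?thesis unfolding inv_arr_def d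
  proof (rule the_equality)
    show "hm g B A \<and> g \<cdot> f = ii A \<and> f \<cdot> g = ii B" using g gf fg by blast
  next
    fix g' assume h: "hm g' B A \<and> g' \<cdot> f = ii A \<and> f \<cdot> g' = ii B"
    have "g' = g' \<cdot> (f \<cdot> g)" using h id_r fg by metis
    also have "\<dots> = (g' \<cdot> f) \<cdot> g" using comp_assoc g f h by metis
    also have "\<dots> = g" using h id_l g by metis
    finally show "g' = g" .
  qed
qed

lemma inv_props:
  assumes "is_iso C f" "hm f A B"
  shows "hm (inv_arr C f) B A \<and> inv_arr C f \<cdot> f = ii A \<and> f \<cdot> inv_arr C f = ii B"
proof -
  have d: "dom C f = A" "cod C f = B" using assms unfolding hom_def by auto
  obtain g where g: "hm g B A" "g \<cdot> f = ii A" "f \<cdot> g = ii B"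
    using assms(1) unfolding is_iso_def d by blast
  then show ?thesis using inv_unique[OF assms(2) g] by simp
qed

lemma braid_unit:
  assumes A: "A \<in> Ob C" shows "braid C A (unit C) = ii A"
proof -
  let ?S = "unit C"
  let ?x = "braid C A ?S"
  have S: "?S \<in> Ob C" by (rule unit_ob)
  have SS: "?S \<star> ?S = ?S" using tob_unit[OF S] by blast
  have AS: "A \<star> ?S = A" "?S \<star> A = A" using tob_unit[OF A] by auto
  have xh: "hm ?x A A" using braid_hom[OF A S] AS by simp
  have "?x = (ii ?S \<otimes> ?x) \<cdot> (?x \<otimes> ii ?S)" using hex2[OF A S S] SS by simp
  also have "\<dots> = ?x \<cdot> ?x" using tar_unit[OF xh] by simp
  finally have xx: "?x = ?x \<cdot> ?x" .
  obtain y where y: "hm y A A" "y \<cdot> ?x = ii A"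
    using inv_props[OF braid_iso[OF A S]] braid_hom[OF A S] AS by auto
  have "ii A = y \<cdot> (?x \<cdot> ?x)" using y xx by simp
  also have "\<dots> = (y \<cdot> ?x) \<cdot> ?x" using comp_assoc[OF xh xh y(1)] .
  also have "\<dots> = ?x" using y id_l[OF xh] by simp
  finally show ?thesis by simp
qed

lemma main:
  assumes T: "T \<in> Ob C" and sym: "symmetric_obj C T" and dual: "is_dual C T V \<eta> \<epsilon>"
  shows "braid C T T = ii T \<otimes> (ii T \<otimes> (\<epsilon> \<cdot> (inv_arr C (braid C T V) \<cdot> \<eta>)))"
proof -
  let ?S = "unit C"
  define b where "b = braid C T T"
  define bi where "bi = inv_arr C b"
  define bv where "bv = braid C T V"
  define bvi where "bvi = inv_arr C bv"
  define e' where "e' = bvi \<cdot> \<eta>"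
  define \<chi> where "\<chi> = \<epsilon> \<cdot> e'"
  have S: "?S \<in> Ob C" by (rule unit_ob)
  have V: "V \<in> Ob C" using dual unfolding is_dual_def by blast
  note obs = T V S tob_ob[OF T T] tob_ob[OF T V] tob_ob[OF V T] tob_ob[OF T tob_ob[OF T T]]
    tob_ob[OF T tob_ob[OF T V]]
  note assoc = tob_assoc[OF T T T] tob_assoc[OF T T V] tob_unit[OF T] tob_unit[OF V]
    tob_unit[OF tob_ob[OF T T]] tob_unit[OF tob_ob[OF T V]]
  have eta: "hm \<eta> ?S (V \<star> T)" and eps: "hm \<epsilon> (T \<star> V) ?S"
    and zig: "(\<epsilon> \<otimes> ii T) \<cdot> (ii T \<otimes> \<eta>) = ii T"
    using dual unfolding is_dual_def by auto
  have bh: "hm b (T \<star> T) (T \<star> T)" unfolding b_def by (rule braid_hom[OF T T])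
  have bi: "hm bi (T \<star> T) (T \<star> T)" "bi \<cdot> b = ii (T \<star> T)" "b \<cdot> bi = ii (T \<star> T)"
    using inv_props[OF braid_iso[OF T T] braid_hom[OF T T]] unfolding bi_def b_def by auto
  have bvh: "hm bv (T \<star> V) (V \<star> T)" unfolding bv_def by (rule braid_hom[OF T V])
  have bvi: "hm bvi (V \<star> T) (T \<star> V)" "bvi \<cdot> bv = ii (T \<star> V)" "bv \<cdot> bvi = ii (V \<star> T)"
    using inv_props[OF braid_iso[OF T V] braid_hom[OF T V]] unfolding bvi_def bv_def by auto
  have e'h: "hm e' ?S (T \<star> V)" unfolding e'_def by (rule comp_hom[OF eta bvi(1)])
  have \<chi>h: "hm \<chi> ?S ?S" unfolding \<chi>_def by (rule comp_hom[OF e'h eps])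
  have iT: "hm (ii T) T T" and iV: "hm (ii V) V V" and iS: "hm (ii ?S) ?S ?S"
    and iTT: "hm (ii (T \<star> T)) (T \<star> T) (T \<star> T)" and iTV: "hm (ii (T \<star> V)) (T \<star> V) (T \<star> V)"
    using id_hom obs by auto

  have Tu: "T \<star> ?S = T" "?S \<star> T = T" using tob_unit[OF T] by auto
  have TTu: "(T \<star> T) \<star> ?S = T \<star> T" using tob_unit[OF tob_ob[OF T T]] by auto
  have a3: "(T \<star> T) \<star> T = T \<star> T \<star> T" "(T \<star> T) \<star> V = T \<star> T \<star> V" "(T \<star> V) \<star> T = T \<star> V \<star> T"
    using tob_assoc obs by auto
  have a4: "((T \<star> T) \<star> T) \<star> V = T \<star> T \<star> T \<star> V" "(T \<star> T) \<star> T \<star> V = T \<star> T \<star> T \<star> V"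
    using tob_assoc obs tob_ob by auto
  have hTbi: "hm (ii T \<otimes> bi) (T \<star> T \<star> T) (T \<star> T \<star> T)" using tar_hom[OF iT bi(1)] by simp
  have hbT: "hm (b \<otimes> ii T) (T \<star> T \<star> T) (T \<star> T \<star> T)" using tar_hom[OF bh iT] a3 by simp
  have hbiT: "hm (bi \<otimes> ii T) (T \<star> T \<star> T) (T \<star> T \<star> T)" using tar_hom[OF bi(1) iT] a3 by simp
  have iTTT: "ii ((T \<star> T) \<star> T) = ii (T \<star> T \<star> T)" using a3 by simp
  have symm: "(ii T \<otimes> bi) \<cdot> (b \<otimes> ii T) = ii (T \<star> T \<star> T)"
    using sym unfolding symmetric_obj_def b_def bi_def .
  have c1: "(b \<otimes> ii T) \<cdot> (bi \<otimes> ii T) = ii (T \<star> T \<star> T)"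
    using interchange[OF bi(1) bh iT iT, symmetric] bi(3) id_l[OF iT] tar_id[OF obs(4) T] a3 by simp
  have D: "ii T \<otimes> bi = bi \<otimes> ii T"
  proof -
    have "ii T \<otimes> bi = (ii T \<otimes> bi) \<cdot> ((b \<otimes> ii T) \<cdot> (bi \<otimes> ii T))" using c1 id_r[OF hTbi] by simp
    also have "\<dots> = ((ii T \<otimes> bi) \<cdot> (b \<otimes> ii T)) \<cdot> (bi \<otimes> ii T)" using comp_assoc[OF hbiT hbT hTbi] .
    also have "\<dots> = bi \<otimes> ii T" using symm id_l[OF hbiT] by simp
    finally show ?thesis .
  qed
  have A: "(ii (T \<star> T) \<otimes> \<epsilon>) \<cdot> ((bi \<otimes> ii T) \<otimes> ii V) \<cdot> (ii (T \<star> T) \<otimes> e') = bi \<otimes> \<chi>"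
  proof -
    have "(bi \<otimes> ii T) \<otimes> ii V = bi \<otimes> ii (T \<star> V)" using tar_assoc[OF bi(1) iT iV] tar_id[OF T V] by simp
    moreover have "(bi \<otimes> ii (T \<star> V)) \<cdot> (ii (T \<star> T) \<otimes> e') = bi \<otimes> e'"
      using interchange[OF iTT bi(1) e'h iTV, symmetric] id_r[OF bi(1)] id_l[OF e'h] by simp
    moreover have "(ii (T \<star> T) \<otimes> \<epsilon>) \<cdot> (bi \<otimes> e') = bi \<otimes> \<chi>"
      using interchange[OF bi(1) iTT e'h eps, symmetric] id_l[OF bi(1)] unfolding \<chi>_def by simp
    ultimately show ?thesis by simp
  qed
  have B: "(ii (T \<star> T) \<otimes> \<epsilon>) \<cdot> ((ii T \<otimes> bi) \<otimes> ii V) \<cdot> (ii (T \<star> T) \<otimes> e')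
      = ii T \<otimes> ((ii T \<otimes> \<epsilon>) \<cdot> (bi \<otimes> ii V) \<cdot> (ii T \<otimes> e'))"
  proof -
    have hTe: "hm (ii T \<otimes> \<epsilon>) (T \<star> T \<star> V) T" using tar_hom[OF iT eps] Tu by simp
    have hbiV: "hm (bi \<otimes> ii V) (T \<star> T \<star> V) (T \<star> T \<star> V)" using tar_hom[OF bi(1) iV] a3 by simp
    have hTe': "hm (ii T \<otimes> e') T (T \<star> T \<star> V)" using tar_hom[OF iT e'h] Tu by simp
    have e1: "ii (T \<star> T) = ii T \<otimes> ii T" using tar_id[OF T T] by simp
    have "(ii (T \<star> T) \<otimes> \<epsilon>) = ii T \<otimes> (ii T \<otimes> \<epsilon>)" using e1 tar_assoc[OF iT iT eps] by simp
    moreover have "(ii T \<otimes> bi) \<otimes> ii V = ii T \<otimes> (bi \<otimes> ii V)" using tar_assoc[OF iT bi(1) iV] by simp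
    moreover have "(ii (T \<star> T) \<otimes> e') = ii T \<otimes> (ii T \<otimes> e')" using e1 tar_assoc[OF iT iT e'h] by simp
    moreover have "(ii T \<otimes> (bi \<otimes> ii V)) \<cdot> (ii T \<otimes> (ii T \<otimes> e')) = ii T \<otimes> ((bi \<otimes> ii V) \<cdot> (ii T \<otimes> e'))"
      using interchange[OF iT iT hTe' hbiV, symmetric] id_l[OF iT] by simp
    moreover have "(ii T \<otimes> (ii T \<otimes> \<epsilon>)) \<cdot> (ii T \<otimes> ((bi \<otimes> ii V) \<cdot> (ii T \<otimes> e')))
        = ii T \<otimes> ((ii T \<otimes> \<epsilon>) \<cdot> (bi \<otimes> ii V) \<cdot> (ii T \<otimes> e'))"
      using interchange[OF iT iT comp_hom[OF hTe' hbiV] hTe, symmetric] id_l[OF iT] by simp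
    ultimately show ?thesis by simp
  qed

  have Cst: "(ii T \<otimes> \<epsilon>) \<cdot> (bi \<otimes> ii V) \<cdot> (ii T \<otimes> e') = ii T"
  proof -
    define B3 where "B3 = braid C T (T \<star> V)"
    have hTe: "hm (ii T \<otimes> \<epsilon>) (T \<star> T \<star> V) T" using tar_hom[OF iT eps] Tu by simp
    have hbiV: "hm (bi \<otimes> ii V) (T \<star> T \<star> V) (T \<star> T \<star> V)" using tar_hom[OF bi(1) iV] a3 by simp
    have hbV: "hm (b \<otimes> ii V) (T \<star> T \<star> V) (T \<star> T \<star> V)" using tar_hom[OF bh iV] a3 by simp
    have hTbvi: "hm (ii T \<otimes> bvi) (T \<star> V \<star> T) (T \<star> T \<star> V)" using tar_hom[OF iT bvi(1)] by simp
    have hTbv: "hm (ii T \<otimes> bv) (T \<star> T \<star> V) (T \<star> V \<star> T)" using tar_hom[OF iT bvh] by simp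
    have hTeta: "hm (ii T \<otimes> \<eta>) T (T \<star> V \<star> T)" using tar_hom[OF iT eta] Tu by simp
    have heT: "hm (\<epsilon> \<otimes> ii T) (T \<star> V \<star> T) T" using tar_hom[OF eps iT] Tu a3 by simp
    have hB3: "hm B3 (T \<star> T \<star> V) (T \<star> V \<star> T)" using braid_hom[OF T obs(5)] a3 unfolding B3_def by simp
    have B3e: "B3 = (ii T \<otimes> bv) \<cdot> (b \<otimes> ii V)" unfolding B3_def b_def bv_def using hex2[OF T T V] .
    have K1: "(b \<otimes> ii V) \<cdot> (bi \<otimes> ii V) = ii (T \<star> T \<star> V)"
      using interchange[OF bi(1) bh iV iV, symmetric] bi(3) id_l[OF iV] tar_id[OF obs(4) V] a3 by simp
    have K2: "(ii T \<otimes> bv) \<cdot> (ii T \<otimes> bvi) = ii (T \<star> V \<star> T)"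
      using interchange[OF iT iT bvi(1) bvh, symmetric] bvi(3) id_l[OF iT] tar_id[OF T obs(6)] by simp
    have hK: "hm ((bi \<otimes> ii V) \<cdot> (ii T \<otimes> bvi)) (T \<star> V \<star> T) (T \<star> T \<star> V)" by (rule comp_hom[OF hTbvi hbiV])
    have B3K: "B3 \<cdot> ((bi \<otimes> ii V) \<cdot> (ii T \<otimes> bvi)) = ii (T \<star> V \<star> T)"
    proof -
      have "B3 \<cdot> ((bi \<otimes> ii V) \<cdot> (ii T \<otimes> bvi)) = (ii T \<otimes> bv) \<cdot> ((b \<otimes> ii V) \<cdot> ((bi \<otimes> ii V) \<cdot> (ii T \<otimes> bvi)))"
        using B3e comp_assoc[OF hK hbV hTbv] by simp
      also have "\<dots> = (ii T \<otimes> bv) \<cdot> (((b \<otimes> ii V) \<cdot> (bi \<otimes> ii V)) \<cdot> (ii T \<otimes> bvi))"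
        using comp_assoc[OF hTbvi hbiV hbV] by simp
      also have "\<dots> = ii (T \<star> V \<star> T)" using K1 K2 id_l[OF hTbvi] by simp
      finally show ?thesis .
    qed
    have nat: "ii T \<otimes> \<epsilon> = (\<epsilon> \<otimes> ii T) \<cdot> B3"
      using braid_nat[OF iT eps] braid_unit[OF T] id_l[OF hTe] unfolding B3_def by simp
    have e'e: "ii T \<otimes> e' = (ii T \<otimes> bvi) \<cdot> (ii T \<otimes> \<eta>)"
      using interchange[OF iT iT eta bvi(1)] id_l[OF iT] unfolding e'_def by simp
    have "(ii T \<otimes> \<epsilon>) \<cdot> (bi \<otimes> ii V) \<cdot> (ii T \<otimes> e')
        = (ii T \<otimes> \<epsilon>) \<cdot> ((bi \<otimes> ii V) \<cdot> (ii T \<otimes> bvi)) \<cdot> (ii T \<otimes> \<eta>)"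
      using e'e comp_assoc[OF hTeta hTbvi hbiV] by simp
    also have "\<dots> = ((\<epsilon> \<otimes> ii T) \<cdot> B3) \<cdot> ((bi \<otimes> ii V) \<cdot> (ii T \<otimes> bvi)) \<cdot> (ii T \<otimes> \<eta>)"
      using nat by simp
    also have "\<dots> = (\<epsilon> \<otimes> ii T) \<cdot> (B3 \<cdot> ((bi \<otimes> ii V) \<cdot> (ii T \<otimes> bvi))) \<cdot> (ii T \<otimes> \<eta>)"
      using comp_assoc[OF comp_hom[OF hTeta hK] hB3 heT] comp_assoc[OF hTeta hK hB3] by simp
    also have "\<dots> = ii T" using B3K id_l[OF hTeta] zig by simp
    finally show ?thesis .
  qed
  have "b = b \<cdot> ii (T \<star> T)" using id_r[OF bh] by simp
  also have "\<dots> = b \<cdot> (bi \<otimes> \<chi>)"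
    using A B Cst D tar_id[OF T T] by simp
  also have "\<dots> = (b \<otimes> ii ?S) \<cdot> (bi \<otimes> \<chi>)" using tar_unit[OF bh] by simp
  also have "\<dots> = ii (T \<star> T) \<otimes> \<chi>"
    using interchange[OF bi(1) bh \<chi>h iS, symmetric] bi(3) id_l[OF \<chi>h] by simp
  also have "\<dots> = ii T \<otimes> (ii T \<otimes> \<chi>)" using tar_id[OF T T] tar_assoc[OF iT iT \<chi>h] by simp
  finally show ?thesis unfolding b_def \<chi>_def e'_def bvi_def bv_def .
qed


end

theorem lemma3p11:
  fixes C :: "('o, 'm) bmcat" and T Tv :: 'o and \<eta> \<epsilon> :: 'm
  assumes "braided_strict_monoidal C"
    and "T \<in> Ob C"
    and "symmetric_obj C T"
    and "is_dual C T Tv \<eta> \<epsilon>"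
  shows "twisted_trivial_braiding C T (tar C (ident C T) (euler_char C T Tv \<eta> \<epsilon>))"
proof -
  interpret bsm C by (rule bsm.intro) (rule assms(1))
  show ?thesis unfolding twisted_trivial_braiding_def euler_char_def
    using main[OF assms(2-4)] .
qed

end
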